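(* Let $L$ be a subspace of $\bigwedge^{k}V$ and let $I\subseteq[n]$. There is no infinite sequence of subspaces $L_0=L,L_1,L_2,\dots$ such that for each $s\ge 0$ there are $i_s<j_s$ in $I$ with $L_{s+1}=N_{j_s\to i_s}L_s$ and $L_{s+1}\neq L_s$. Equivalently, the procedure "while there is a pair $i<j$ in $I$ with $N_{j\to i}L\neq L$, replace $L$ by $N_{j\to i}L$" terminates for every choice of such non-fixing slow shifts.
   Context: $\mathbb{F}$ is a field (assumed throughout the paper, for expository purposes, to have characteristic not $2$), $V$ is an $n$-dimensional $\mathbb{F}$-vector space with a fixed basis $e_1,\dots,e_n$, and $\bigwedge V=\bigoplus_k\bigwedge^kV$ is its exterior algebra, with $\bigwedge^kV$ having the monomial basis $e_S=e_{s_1}\wedge\cdots\wedge e_{s_k}$, $S=\{s_1<\cdots<s_k\}\subseteq[n]$. For $j\in[n]$, $V^{(j)}$ is the span of $\{e_h:h\neq j\}$, and $\bigwedge V^{(j)}$ is viewed as a subalgebra of $\bigwedge V$. Slow shift: for distinct $i,j\in[n]$ and nonzero $m\in\bigwedge^kV$, write uniquely $m=x+e_j\wedge y$ with $x\in\bigwedge^kV^{(j)}$, $y\in\bigwedge^{k-1}V^{(j)}$, and set $N_{j\to i}m=x+e_i\wedge y$ if this is nonzero, and $N_{j\to i}m=e_j\wedge y$ otherwise (this is, up to scalar, the limit as $t\to 0$ of the action on $\mathbb{P}(\bigwedge^kV)$ of the linear map sending $e_j\mapsto e_i+te_j$ and fixing the other $e_h$, obtained by evaluating at $t=0$ the representative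 with polynomial coefficients having no common factor of positive $t$-degree). For a subspace $L$ of $\bigwedge^kV$, $N_{j\to i}L$ is the span of $\{N_{j\to i}m: m\in L\setminus\{0\}\}$; it has the same dimension as $L$. *)

theory Defs
  imports Complex_Main "HOL-Library.Function_Algebras"
begin

text \<open>Elements of the k-th exterior power of V = F^n (basis e_1..e_n) are represented by
  their coefficient functions on index sets S: m S is the coefficient of the monomial e_S
  (S = {s_1 < ... < s_k}).\<close>

definition wscale :: "'a::field \<Rightarrow> (nat set \<Rightarrow> 'a) \<Rightarrow> (nat set \<Rightarrow> 'a)" where
  "wscale c f = (\<lambda>S. c * f S)"

definition wedge_space :: "nat \<Rightarrow> nat \<Rightarrow> (nat set \<Rightarrow> 'a::field) set" where
  "wedge_space n k = {m. \<forall>S. m S \<noteq> 0 \<longrightarrow> S \<subseteq> {1..n} \<and> card S = k}"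

text \<open>Sign of e_i wedge e_T = wsign i T * e_(insert i T), for i not in T.\<close>
definition wsign :: "nat \<Rightarrow> nat set \<Rightarrow> 'a::field" where
  "wsign i T = (-1) ^ card {t\<in>T. t < i}"

text \<open>Slow shift N_{j->i} of a single element m = x + e_j wedge y.
  The coefficient of x + e_i wedge y at S: zero if j in S, otherwise
  m S + [i in S] * sign(e_i wedge e_(S-{i})) * y_(S-{i}), where
  y_T = sign(e_j wedge e_T) * m(insert j T). The fallback e_j wedge y = m restricted to sets containing j.\<close>
definition slow_shift_elt :: "nat \<Rightarrow> nat \<Rightarrow> (nat set \<Rightarrow> 'a::field) \<Rightarrow> (nat set \<Rightarrow> 'a)" where
  "slow_shift_elt j i m =
    (let z = (\<lambda>S. if j \<in> S then 0
                  else m S + (if i \<in> S then wsign i (S - {i}) * wsign j (S - {i}) * m (insert j (S - {i}))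
                              else 0))
     in if z \<noteq> (\<lambda>S. 0) then z else (\<lambda>S. if j \<in> S then m S else 0))"

definition slow_shift :: "nat \<Rightarrow> nat \<Rightarrow> (nat set \<Rightarrow> 'a::field) set \<Rightarrow> (nat set \<Rightarrow> 'a) set" where
  "slow_shift j i L = module.span wscale {slow_shift_elt j i m | m. m \<in> L \<and> m \<noteq> (\<lambda>S. 0)}"

end

theory Submission
  imports Defs
begin


context vector_space
begin

definition fdim :: "'b set \<Rightarrow> bool" where
  "fdim X \<longleftrightarrow> (\<exists>B. finite B \<and> X \<subseteq> local.span B)"

lemma fdim_subset: "local.fdim B \<Longrightarrow> A \<subseteq> B \<Longrightarrow> local.fdim A"
  unfolding fdim_def by blast

lemma fdim_basis:
  assumes "local.fdim A"
  obtains C where "C \<subseteq> A" "local.independent C" "A \<subseteq> local.span C" "card C = local.dim A" "finite C"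
proof -
  obtain B0 where B0: "finite B0" "A \<subseteq> local.span B0" using assms unfolding fdim_def by blast
  obtain C where C: "C \<subseteq> A" "local.independent C" "A \<subseteq> local.span C" "card C = local.dim A"
    by (rule basis_exists)
  have "finite C" using independent_span_bound[OF B0(1) C(2)] C(1) B0(2) by blast
  then show ?thesis using C that by blast
qed

lemma dim_mono_fd:
  assumes "A \<subseteq> B" "local.fdim B"
  shows "local.dim A \<le> local.dim B"
proof -
  obtain C where C: "C \<subseteq> B" "local.independent C" "B \<subseteq> local.span C" "card C = local.dim B" "finite C"
    using fdim_basis[OF assms(2)] by blast
  have "A \<subseteq> local.span C" using assms(1) C(3) by blast
  then show ?thesis using dim_le_card[OF _ C(5)] C(4) by simp
qed

lemma subspace_eq_dim:
  assumes "subspace A" "A \<subseteq> B" "local.fdim B" "local.dim B \<le> local.dim A"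
  shows "A = B"
proof -
  have fA: "local.fdim A" using fdim_subset[OF assms(3,2)] .
  obtain C where C: "C \<subseteq> A" "local.independent C" "A \<subseteq> local.span C" "card C = local.dim A" "finite C"
    using fdim_basis[OF fA] by blast
  obtain E where E: "C \<subseteq> E" "E \<subseteq> B" "local.independent E" "B \<subseteq> local.span E"
    using maximal_independent_subset_extend[of C B] C(1,2) assms(2) by blast
  obtain B0 where B0: "finite B0" "B \<subseteq> local.span B0" using assms(3) unfolding fdim_def by blast
  have fE: "finite E" using independent_span_bound[OF B0(1) E(3)] E(2) B0(2) by blast
  have "card E = local.dim B" using basis_card_eq_dim[OF E(2) E(4) E(3)] .
  then have "card E \<le> card C" using assms(4) C(4) by simp
  then have "E = C" using card_seteq[OF fE E(1)] by blast
  then have "B \<subseteq> local.span C" using E(4) by simp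
  also have "local.span C \<subseteq> A" using span_minimal[OF C(1) assms(1)] .
  finally show ?thesis using assms(2) by blast
qed

lemma span_disjoint_indep:
  assumes "local.independent E" "R \<subseteq> E" "C \<subseteq> E" "R \<inter> C = {}" "finite E"
    and "x \<in> local.span R" "x \<in> local.span C"
  shows "x = 0"
proof -
  have fR: "finite R" and fC: "finite C" using assms(2,3,5) finite_subset by auto
  obtain u where u: "x = (\<Sum>v\<in>R. u v *s v)" using assms(6) span_finite[OF fR] by auto
  obtain w where w: "x = (\<Sum>v\<in>C. w v *s v)" using assms(7) span_finite[OF fC] by auto
  define c where "c v = (if v \<in> R then u v else - w v)" for v
  have "(\<Sum>v\<in>R \<union> C. c v *s v) = (\<Sum>v\<in>R. c v *s v) + (\<Sum>v\<in>C. c v *s v)"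
    by (rule sum.union_disjoint[OF fR fC assms(4)])
  also have "(\<Sum>v\<in>R. c v *s v) = x" unfolding u by (rule sum.cong) (auto simp: c_def)
  also have "(\<Sum>v\<in>C. c v *s v) = - x" unfolding w
    using assms(4) by (auto simp: c_def sum_negf[symmetric] intro!: sum.cong)
  finally have "(\<Sum>v\<in>R \<union> C. c v *s v) = 0" by simp
  moreover have H: "\<forall>S\<subseteq>E. finite S \<longrightarrow> (\<forall>u. (\<Sum>v\<in>S. u v *s v) = 0 \<longrightarrow> (\<forall>v\<in>S. u v = 0))"
    using assms(1) unfolding independent_explicit_finite_subsets .
  moreover have "R \<union> C \<subseteq> E" "finite (R \<union> C)" using assms(2,3) fR fC by auto
  ultimately have "\<forall>v\<in>R \<union> C. c v = 0" by blast
  then have "\<forall>v\<in>R. u v = 0" unfolding c_def by (metis UnCI)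
  then show ?thesis unfolding u by simp
qed

lemma rank_nullity:
  assumes lin: "Vector_Spaces.linear scale scale g" and A: "subspace A" "local.fdim A"
  shows "local.dim A = local.dim (g ` A) + local.dim (A \<inter> {x. g x = 0})"
proof -
  interpret lg: Vector_Spaces.linear scale scale g by fact
  let ?K = "A \<inter> {x. g x = 0}"
  have fK: "local.fdim ?K" using fdim_subset[OF A(2)] by blast
  obtain C where C: "C \<subseteq> ?K" "local.independent C" "?K \<subseteq> local.span C" "card C = local.dim ?K" "finite C"
    using fdim_basis[OF fK] by blast
  obtain E where E: "C \<subseteq> E" "E \<subseteq> A" "local.independent E" "A \<subseteq> local.span E"
    using maximal_independent_subset_extend[of C A] C(1,2) by blast
  obtain B0 where B0: "finite B0" "A \<subseteq> local.span B0" using A(2) unfolding fdim_def by blast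
  have fE: "finite E" using independent_span_bound[OF B0(1) E(3)] E(2) B0(2) by blast
  have cE: "card E = local.dim A" using basis_card_eq_dim[OF E(2) E(4) E(3)] .
  define R where "R = E - C"
  have spanE: "local.span E = A" using span_subspace[OF E(2) E(4) A(1)] .
  have g0: "g c = 0" if "c \<in> C" for c using C(1) that by blast
  have "g ` A = local.span (g ` E)" using spanE lg.span_image by simp
  also have "g ` E \<subseteq> insert 0 (g ` R)" using g0 by (auto simp: R_def)
  then have "local.span (g ` E) \<subseteq> local.span (g ` R)"
    using span_mono[of "g ` E" "insert 0 (g ` R)"] by simp
  moreover have "local.span (g ` R) \<subseteq> local.span (g ` E)" by (rule span_mono) (auto simp: R_def)
  ultimately have gA: "g ` A = local.span (g ` R)" by blast
  have injR: "inj_on g (local.span R)"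
  proof (rule lg.inj_on_iff_eq_0[THEN iffD2])
    show "subspace (local.span R)" by simp
    show "\<forall>x\<in>local.span R. g x = 0 \<longrightarrow> x = 0"
    proof (intro ballI impI)
      fix x assume x: "x \<in> local.span R" "g x = 0"
      have "local.span R \<subseteq> A" using span_minimal[of R A] E(2) A(1) by (auto simp: R_def)
      then have "x \<in> ?K" using x by blast
      then have "x \<in> local.span C" using C(3) by blast
      then show "x = 0" using span_disjoint_indep[OF E(3) _ E(1) _ fE x(1)] by (auto simp: R_def)
    qed
  qed
  have indR: "local.independent R" using independent_mono[OF E(3)] by (auto simp: R_def)
  have indgR: "local.independent (g ` R)" using lg.independent_injective_image[OF indR injR] .
  have "local.dim (g ` A) = card (g ` R)" unfolding gA using dim_span_eq_card_independent[OF indgR] .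
  also have "\<dots> = card R" using card_image[OF inj_on_subset[OF injR span_superset]] .
  also have "\<dots> = card E - card C" unfolding R_def using card_Diff_subset[OF C(5) E(1)] .
  finally have "local.dim (g ` A) = card E - card C" .
  moreover have "card C \<le> card E" using card_mono[OF fE E(1)] .
  ultimately show ?thesis using cE C(4) by simp
qed

end



interpretation vs: vector_space "wscale :: 'a::field \<Rightarrow> (nat set \<Rightarrow> 'a) \<Rightarrow> (nat set \<Rightarrow> 'a)"
  by unfold_locales (auto simp: wscale_def fun_eq_iff algebra_simps)

context vector_space begin
lemma fdim_image:
  assumes "Vector_Spaces.linear scale scale g" "local.fdim A"
  shows "local.fdim (g ` A)"
proof -
  interpret lg: Vector_Spaces.linear scale scale g by fact
  obtain B where "finite B" "A \<subseteq> local.span B" using assms(2) unfolding fdim_def by blast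
  then show ?thesis unfolding fdim_def using lg.spans_image[of A B] by blast
qed

lemma fdim_sums:
  assumes "local.fdim X" "local.fdim Y"
  shows "local.fdim {x + y |x y. x \<in> X \<and> y \<in> Y}"
proof -
  obtain B where B: "finite B" "X \<subseteq> local.span B" using assms(1) unfolding fdim_def by blast
  obtain C where C: "finite C" "Y \<subseteq> local.span C" using assms(2) unfolding fdim_def by blast
  have "X \<subseteq> local.span (B \<union> C)" "Y \<subseteq> local.span (B \<union> C)"
    using B C span_mono[of B "B \<union> C"] span_mono[of C "B \<union> C"] by auto
  then have "{x + y |x y. x \<in> X \<and> y \<in> Y} \<subseteq> local.span (B \<union> C)"
    using span_add by blast
  then show ?thesis unfolding fdim_def using B C by blast
qed

lemma dim_zero_set: "local.dim {0} = 0"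
  using dim_span[of "{}"] dim_eq_card_independent[OF independent_empty] by simp
end

definition fm :: "nat \<Rightarrow> nat \<Rightarrow> (nat set \<Rightarrow> 'a::field) \<Rightarrow> nat set \<Rightarrow> 'a" where
  "fm j i m = (\<lambda>S. if j \<in> S then 0 else m S +
      (if i \<in> S then wsign i (S - {i}) * wsign j (S - {i}) * m (insert j (S - {i})) else 0))"

definition pj :: "nat \<Rightarrow> (nat set \<Rightarrow> 'a::field) \<Rightarrow> nat set \<Rightarrow> 'a" where
  "pj j m = (\<lambda>S. if j \<in> S then m S else 0)"

definition cs :: "(nat set \<Rightarrow> bool) \<Rightarrow> (nat set \<Rightarrow> 'a::field) set" where
  "cs Q = {m. \<forall>S. m S \<noteq> 0 \<longrightarrow> Q S}"

lemma lin_fm: "Vector_Spaces.linear wscale wscale (fm j i :: (nat set \<Rightarrow> 'a::field) \<Rightarrow> _)"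
  unfolding Vector_Spaces.linear_iff
  by (auto simp: vs.vector_space_axioms fm_def wscale_def fun_eq_iff algebra_simps)

lemma lin_pj: "Vector_Spaces.linear wscale wscale (pj j :: (nat set \<Rightarrow> 'a::field) \<Rightarrow> _)"
  unfolding Vector_Spaces.linear_iff
  by (auto simp: vs.vector_space_axioms pj_def wscale_def fun_eq_iff algebra_simps)

lemma sub_cs: "vs.subspace (cs Q)"
  unfolding vs.subspace_def cs_def by (auto simp: wscale_def) (metis add_0)

lemma cs_inter: "cs Q \<inter> cs R = cs (\<lambda>S. Q S \<and> R S)"
  unfolding cs_def by auto

lemma cs_mono: "(\<And>S. Q S \<Longrightarrow> R S) \<Longrightarrow> cs Q \<subseteq> cs R"
  unfolding cs_def by auto

lemma cs_True: "cs (\<lambda>S. True) = UNIV"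
  unfolding cs_def by auto

lemma sse_eq: "slow_shift_elt j i m = (if fm j i m \<noteq> 0 then fm j i m else pj j m)"
  unfolding slow_shift_elt_def fm_def pj_def Let_def zero_fun_def by simp

lemma fm_Uj: "fm j i m \<in> cs (\<lambda>S. j \<notin> S)"
  unfolding fm_def cs_def by auto

lemma fm_id: "m \<in> cs (\<lambda>S. j \<notin> S) \<Longrightarrow> fm j i m = m"
  unfolding fm_def cs_def fun_eq_iff by auto

lemma pj_E: "pj j m \<in> cs (\<lambda>S. j \<in> S)"
  unfolding pj_def cs_def by auto

lemma pj_id: "m \<in> cs (\<lambda>S. j \<in> S) \<Longrightarrow> pj j m = m"
  unfolding pj_def cs_def fun_eq_iff by auto

lemma pj_pj: "pj j (pj j m) = pj j m"
  unfolding pj_def by auto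

lemma pj_fm: "pj j (fm j i m) = 0"
  unfolding pj_def fm_def fun_eq_iff by auto

lemma pj_zero_iff: "pj j m = 0 \<longleftrightarrow> m \<in> cs (\<lambda>S. j \<notin> S)"
  unfolding pj_def cs_def fun_eq_iff by auto

lemma pj_cs: "m \<in> cs Q \<Longrightarrow> pj j m \<in> cs Q"
  unfolding pj_def cs_def by auto

lemma fm_cs:
  assumes cl: "\<forall>T. i \<notin> T \<longrightarrow> j \<notin> T \<longrightarrow> Q (insert j T) \<longrightarrow> Q (insert i T)"
    and m: "m \<in> cs Q"
  shows "fm j i m \<in> cs Q"
  unfolding cs_def
proof (intro CollectI allI impI)
  fix S assume nz: "fm j i m S \<noteq> 0"
  then have jS: "j \<notin> S" unfolding fm_def by auto
  show "Q S"
  proof (cases "m S = 0")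
    case False then show ?thesis using m unfolding cs_def by auto
  next
    case True
    with nz jS have iS: "i \<in> S" and mz: "m (insert j (S - {i})) \<noteq> 0" unfolding fm_def
      by (auto split: if_splits)
    have "Q (insert j (S - {i}))" using m mz unfolding cs_def by auto
    then have "Q (insert i (S - {i}))" using cl jS by auto
    then show ?thesis using iS by (simp add: insert_absorb)
  qed
qed

lemma fm_zero: "fm j i 0 = 0"
  unfolding fm_def by (auto simp: fun_eq_iff)

lemma pj_zero: "pj j 0 = 0"
  unfolding pj_def by (auto simp: fun_eq_iff)

abbreviation gens where
  "gens j i L \<equiv> {slow_shift_elt j i m | m. m \<in> L \<and> m \<noteq> 0}"

lemma ss_def': "slow_shift j i L = vs.span (gens j i L)"
  unfolding slow_shift_def by (simp only: zero_fun_def)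

lemma N1: "m \<in> L \<Longrightarrow> fm j i m \<in> slow_shift j i L"
proof (cases "fm j i m = 0")
  case True then show ?thesis unfolding ss_def' by (simp add: vs.span_zero)
next
  case False
  assume mL: "m \<in> L"
  have "m \<noteq> 0" using False fm_zero by auto
  then have "fm j i m \<in> gens j i L" using mL False sse_eq[of j i m] by auto
  then show ?thesis unfolding ss_def' by (rule vs.span_base)
qed

lemma N2: "m \<in> L \<Longrightarrow> fm j i m = 0 \<Longrightarrow> pj j m \<in> slow_shift j i L"
proof (cases "m = 0")
  case True then show ?thesis unfolding ss_def' by (simp add: pj_zero vs.span_zero)
next
  case False
  assume mL: "m \<in> L" and f0: "fm j i m = 0"
  then have e: "pj j m = slow_shift_elt j i m" using sse_eq[of j i m] by simp
  have "pj j m \<in> gens j i L" using e mL False by blast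
  then show ?thesis unfolding ss_def' by (rule vs.span_base)
qed

lemma N3: "x \<in> slow_shift j i L \<Longrightarrow> pj j x \<in> slow_shift j i L"
proof -
  interpret lp: Vector_Spaces.linear wscale wscale "pj j" by (rule lin_pj)
  assume x: "x \<in> slow_shift j i L"
  have "pj j ` gens j i L \<subseteq> slow_shift j i L"
  proof
    fix y assume "y \<in> pj j ` gens j i L"
    then obtain m where m: "m \<in> L" "m \<noteq> 0" "y = pj j (slow_shift_elt j i m)" by auto
    show "y \<in> slow_shift j i L"
    proof (cases "fm j i m = 0")
      case True
      then have "y = pj j m" using m sse_eq[of j i m] pj_pj by simp
      then show ?thesis using N2[OF m(1) True] by simp
    next
      case False
      then have "y = 0" using m sse_eq[of j i m] pj_fm by simp
      then show ?thesis unfolding ss_def' by (simp add: vs.span_zero)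
    qed
  qed
  then have "vs.span (pj j ` gens j i L) \<subseteq> slow_shift j i L"
    unfolding ss_def' by (rule vs.span_minimal) simp
  moreover have "pj j x \<in> vs.span (pj j ` gens j i L)"
    using x unfolding ss_def' lp.span_image by blast
  ultimately show ?thesis by blast
qed

lemma N4: "vs.subspace (slow_shift j i L)"
  unfolding ss_def' by simp



lemma wedge_cs: "wedge_space n k = cs (\<lambda>S. S \<subseteq> {1..n} \<and> card S = k)"
  unfolding wedge_space_def cs_def ..

lemma sum_fun_apply: "(\<Sum>S\<in>A. g S) T = (\<Sum>S\<in>A. g S T)"
  by (induction A rule: infinite_finite_induct) auto

lemma wedge_fdim: "vs.fdim (wedge_space n k :: (nat set \<Rightarrow> 'a::field) set)"
proof -
  let ?A = "{S. S \<subseteq> {1..n} \<and> card S = k}"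
  define dl :: "nat set \<Rightarrow> nat set \<Rightarrow> 'a" where "dl S = (\<lambda>T. if T = S then 1 else 0)" for S
  have finA: "finite ?A" by (rule finite_subset[of _ "Pow {1..n}"]) auto
  have "m \<in> vs.span (dl ` ?A)" if m: "m \<in> wedge_space n k" for m :: "nat set \<Rightarrow> 'a"
  proof -
    have "m = (\<Sum>S\<in>?A. wscale (m S) (dl S))"
    proof
      fix T
      have "(\<Sum>S\<in>?A. wscale (m S) (dl S)) T = (\<Sum>S\<in>?A. m S * (if T = S then 1 else 0))"
        unfolding sum_fun_apply by (simp add: wscale_def dl_def)
      also have "\<dots> = (if T \<in> ?A then m T else 0)"
        using finA by (simp add: sum.delta[OF finA] if_distrib cong: if_cong)
      also have "\<dots> = m T" using m unfolding wedge_space_def by auto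
      finally show "m T = (\<Sum>S\<in>?A. wscale (m S) (dl S)) T" by simp
    qed
    also have "\<dots> \<in> vs.span (dl ` ?A)"
      by (intro vs.span_sum vs.span_scale vs.span_base) auto
    finally show ?thesis .
  qed
  then show ?thesis unfolding vs.fdim_def using finA by blast
qed

lemma sub_ker_fm: "vs.subspace {x. fm j i x = 0}"
proof -
  interpret lf: Vector_Spaces.linear wscale wscale "fm j i" by (rule lin_fm)
  show ?thesis by (rule lf.subspace_kernel)
qed

lemma sub_img_fm: "vs.subspace A \<Longrightarrow> vs.subspace (fm j i ` A)"
proof -
  interpret lf: Vector_Spaces.linear wscale wscale "fm j i" by (rule lin_fm)
  show "vs.subspace A \<Longrightarrow> vs.subspace (fm j i ` A)" by (rule lf.subspace_image)
qed

lemma sub_img_pj: "vs.subspace A \<Longrightarrow> vs.subspace (pj j ` A)"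
proof -
  interpret lf: Vector_Spaces.linear wscale wscale "pj j" by (rule lin_pj)
  show "vs.subspace A \<Longrightarrow> vs.subspace (pj j ` A)" by (rule lf.subspace_image)
qed

lemma ker_pj: "{x. pj j x = 0} = cs (\<lambda>S. j \<notin> S)"
  by (auto simp: pj_zero_iff)

lemma DS:
  assumes X: "vs.subspace X" "X \<subseteq> cs (\<lambda>S. j \<notin> S)" "vs.fdim X"
    and Y: "vs.subspace Y" "Y \<subseteq> cs (\<lambda>S. j \<in> S)" "vs.fdim Y"
  shows "vs.dim X + vs.dim Y \<le> vs.dim {x + y |x y. x \<in> X \<and> y \<in> Y}"
proof -
  let ?S = "{x + y |x y. x \<in> X \<and> y \<in> Y}"
  have sS: "vs.subspace ?S" by (rule vs.subspace_sums[OF X(1) Y(1)])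
  have fS: "vs.fdim ?S" by (rule vs.fdim_sums[OF X(3) Y(3)])
  have rn: "vs.dim ?S = vs.dim (pj j ` ?S) + vs.dim (?S \<inter> {x. pj j x = 0})"
    by (rule vs.rank_nullity[OF lin_pj sS fS])
  have "Y \<subseteq> pj j ` ?S"
  proof
    fix y assume y: "y \<in> Y"
    have "y = pj j (0 + y)" using pj_id[of y j] Y(2) y by auto
    moreover have "0 + y \<in> ?S" using vs.subspace_0[OF X(1)] y by blast
    ultimately show "y \<in> pj j ` ?S" by blast
  qed
  moreover have "vs.fdim (pj j ` ?S)" by (rule vs.fdim_image[OF lin_pj fS])
  ultimately have d1: "vs.dim Y \<le> vs.dim (pj j ` ?S)" by (rule vs.dim_mono_fd)
  have "X \<subseteq> ?S \<inter> {x. pj j x = 0}"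
  proof
    fix x assume x: "x \<in> X"
    have "x = x + 0" by simp
    then have "x \<in> ?S" using vs.subspace_0[OF Y(1)] x by blast
    moreover have "pj j x = 0" using x X(2) pj_zero_iff by blast
    ultimately show "x \<in> ?S \<inter> {x. pj j x = 0}" by blast
  qed
  moreover have "vs.fdim (?S \<inter> {x. pj j x = 0})" by (rule vs.fdim_subset[OF fS]) blast
  ultimately have d2: "vs.dim X \<le> vs.dim (?S \<inter> {x. pj j x = 0})" by (rule vs.dim_mono_fd)
  show ?thesis using rn d1 d2 by simp
qed

lemma dimK:
  assumes A: "vs.subspace A" "vs.fdim A"
  shows "vs.dim (A \<inter> {x. fm j i x = 0}) = vs.dim (pj j ` (A \<inter> {x. fm j i x = 0}))"
proof -
  let ?K = "A \<inter> {x. fm j i x = 0}"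
  have sK: "vs.subspace ?K" using vs.subspace_inter[OF A(1) sub_ker_fm] .
  have fK: "vs.fdim ?K" by (rule vs.fdim_subset[OF A(2)]) blast
  have rn: "vs.dim ?K = vs.dim (pj j ` ?K) + vs.dim (?K \<inter> {x. pj j x = 0})"
    by (rule vs.rank_nullity[OF lin_pj sK fK])
  have "?K \<inter> {x. pj j x = 0} = {0}"
  proof
    show "?K \<inter> {x. pj j x = 0} \<subseteq> {0}"
    proof
      fix x assume x: "x \<in> ?K \<inter> {x. pj j x = 0}"
      then have "x \<in> cs (\<lambda>S. j \<notin> S)" using pj_zero_iff by blast
      then have "fm j i x = x" by (rule fm_id)
      then show "x \<in> {0}" using x by simp
    qed
    show "{0} \<subseteq> ?K \<inter> {x. pj j x = 0}"
      using vs.subspace_0[OF sK] pj_zero by auto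
  qed
  then show ?thesis using rn vs.dim_zero_set by simp
qed

lemma semi:
  assumes L: "vs.subspace L" "vs.fdim L" and NLf: "vs.fdim (slow_shift j i L)"
    and cl: "\<forall>T. i \<notin> T \<longrightarrow> j \<notin> T \<longrightarrow> Q (insert j T) \<longrightarrow> Q (insert i T)"
  shows "vs.dim (L \<inter> cs Q) \<le> vs.dim (slow_shift j i L \<inter> cs Q)"
proof -
  let ?A = "L \<inter> cs Q"
  let ?K = "?A \<inter> {x. fm j i x = 0}"
  let ?NL = "slow_shift j i L"
  have sA: "vs.subspace ?A" using vs.subspace_inter[OF L(1) sub_cs] .
  have fA: "vs.fdim ?A" by (rule vs.fdim_subset[OF L(2)]) blast
  have rn1: "vs.dim ?A = vs.dim (fm j i ` ?A) + vs.dim ?K"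
    by (rule vs.rank_nullity[OF lin_fm sA fA])
  have dK: "vs.dim ?K = vs.dim (pj j ` ?K)" by (rule dimK[OF sA fA])
  have sK: "vs.subspace ?K" using vs.subspace_inter[OF sA sub_ker_fm] .
  have fK: "vs.fdim ?K" by (rule vs.fdim_subset[OF fA]) blast
  have ds: "vs.dim (fm j i ` ?A) + vs.dim (pj j ` ?K)
      \<le> vs.dim {x + y |x y. x \<in> fm j i ` ?A \<and> y \<in> pj j ` ?K}"
  proof (rule DS)
    show "vs.subspace (fm j i ` ?A)" by (rule sub_img_fm[OF sA])
    show "fm j i ` ?A \<subseteq> cs (\<lambda>S. j \<notin> S)" using fm_Uj by blast
    show "vs.fdim (fm j i ` ?A)" by (rule vs.fdim_image[OF lin_fm fA])
    show "vs.subspace (pj j ` ?K)" by (rule sub_img_pj[OF sK])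
    show "pj j ` ?K \<subseteq> cs (\<lambda>S. j \<in> S)" using pj_E by blast
    show "vs.fdim (pj j ` ?K)" by (rule vs.fdim_image[OF lin_pj fK])
  qed
  have sub: "{x + y |x y. x \<in> fm j i ` ?A \<and> y \<in> pj j ` ?K} \<subseteq> ?NL \<inter> cs Q"
  proof
    fix z assume "z \<in> {x + y |x y. x \<in> fm j i ` ?A \<and> y \<in> pj j ` ?K}"
    then obtain x y where xy: "z = x + y" "x \<in> fm j i ` ?A" "y \<in> pj j ` ?K" by blast
    then obtain a b where ab: "z = fm j i a + pj j b" "a \<in> L" "a \<in> cs Q" "b \<in> L" "b \<in> cs Q"
      "fm j i b = 0" by auto
    have s: "vs.subspace (?NL \<inter> cs Q)" using vs.subspace_inter[OF N4 sub_cs] .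
    have "fm j i a \<in> ?NL \<inter> cs Q" using N1[OF ab(2)] fm_cs[OF cl ab(3)] by blast
    moreover have "pj j b \<in> ?NL \<inter> cs Q" using N2[OF ab(4) ab(6)] pj_cs[OF ab(5)] by blast
    ultimately show "z \<in> ?NL \<inter> cs Q" unfolding ab(1) by (rule vs.subspace_add[OF s])
  qed
  have "vs.fdim (?NL \<inter> cs Q)" by (rule vs.fdim_subset[OF NLf]) blast
  then have "vs.dim {x + y |x y. x \<in> fm j i ` ?A \<and> y \<in> pj j ` ?K} \<le> vs.dim (?NL \<inter> cs Q)"
    by (rule vs.dim_mono_fd[OF sub])
  then show ?thesis using rn1 dK ds by simp
qed


lemma Lside:
  assumes L: "vs.subspace L" "vs.fdim L"
  shows "vs.dim (L \<inter> cs (\<lambda>S. i \<notin> S)) + vs.dim (L \<inter> cs (\<lambda>S. j \<notin> S))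
     \<le> vs.dim (L \<inter> cs (\<lambda>S. \<not> (i \<in> S \<and> j \<in> S))) + vs.dim (L \<inter> cs (\<lambda>S. i \<notin> S \<and> j \<notin> S))"
proof -
  let ?A = "L \<inter> cs (\<lambda>S. i \<notin> S)"
  let ?M = "L \<inter> cs (\<lambda>S. \<not> (i \<in> S \<and> j \<in> S))"
  have sA: "vs.subspace ?A" using vs.subspace_inter[OF L(1) sub_cs] .
  have fA: "vs.fdim ?A" by (rule vs.fdim_subset[OF L(2)]) blast
  have sM: "vs.subspace ?M" using vs.subspace_inter[OF L(1) sub_cs] .
  have fM: "vs.fdim ?M" by (rule vs.fdim_subset[OF L(2)]) blast
  have rnA: "vs.dim ?A = vs.dim (pj j ` ?A) + vs.dim (?A \<inter> {x. pj j x = 0})"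
    by (rule vs.rank_nullity[OF lin_pj sA fA])
  have rnM: "vs.dim ?M = vs.dim (pj j ` ?M) + vs.dim (?M \<inter> {x. pj j x = 0})"
    by (rule vs.rank_nullity[OF lin_pj sM fM])
  have e1: "?A \<inter> {x. pj j x = 0} = L \<inter> cs (\<lambda>S. i \<notin> S \<and> j \<notin> S)"
    unfolding ker_pj cs_def by auto
  have e2: "?M \<inter> {x. pj j x = 0} = L \<inter> cs (\<lambda>S. j \<notin> S)"
    unfolding ker_pj cs_def by auto
  have "pj j ` ?A \<subseteq> pj j ` ?M" unfolding cs_def by auto
  moreover have "vs.fdim (pj j ` ?M)" by (rule vs.fdim_image[OF lin_pj fM])
  ultimately have "vs.dim (pj j ` ?A) \<le> vs.dim (pj j ` ?M)" by (rule vs.dim_mono_fd)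
  then show ?thesis using rnA rnM e1 e2 by simp
qed

lemma Nside:
  assumes N: "vs.subspace N" "vs.fdim N" and cl: "\<And>x. x \<in> N \<Longrightarrow> pj j x \<in> N"
  shows "vs.dim (N \<inter> cs (\<lambda>S. \<not> (i \<in> S \<and> j \<in> S))) + vs.dim (N \<inter> cs (\<lambda>S. i \<notin> S \<and> j \<notin> S))
     \<le> vs.dim (N \<inter> cs (\<lambda>S. i \<notin> S)) + vs.dim (N \<inter> cs (\<lambda>S. j \<notin> S))"
proof -
  let ?A = "N \<inter> cs (\<lambda>S. i \<notin> S)"
  let ?M = "N \<inter> cs (\<lambda>S. \<not> (i \<in> S \<and> j \<in> S))"
  have sA: "vs.subspace ?A" using vs.subspace_inter[OF N(1) sub_cs] .
  have fA: "vs.fdim ?A" by (rule vs.fdim_subset[OF N(2)]) blast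
  have sM: "vs.subspace ?M" using vs.subspace_inter[OF N(1) sub_cs] .
  have fM: "vs.fdim ?M" by (rule vs.fdim_subset[OF N(2)]) blast
  have rnA: "vs.dim ?A = vs.dim (pj j ` ?A) + vs.dim (?A \<inter> {x. pj j x = 0})"
    by (rule vs.rank_nullity[OF lin_pj sA fA])
  have rnM: "vs.dim ?M = vs.dim (pj j ` ?M) + vs.dim (?M \<inter> {x. pj j x = 0})"
    by (rule vs.rank_nullity[OF lin_pj sM fM])
  have e1: "?A \<inter> {x. pj j x = 0} = N \<inter> cs (\<lambda>S. i \<notin> S \<and> j \<notin> S)"
    unfolding ker_pj cs_def by auto
  have e2: "?M \<inter> {x. pj j x = 0} = N \<inter> cs (\<lambda>S. j \<notin> S)"
    unfolding ker_pj cs_def by auto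
  have "pj j ` ?M \<subseteq> pj j ` ?A"
  proof
    fix y assume "y \<in> pj j ` ?M"
    then obtain m where m: "m \<in> N" "m \<in> cs (\<lambda>S. \<not> (i \<in> S \<and> j \<in> S))" "y = pj j m" by blast
    have "pj j m \<in> N" using cl[OF m(1)] .
    moreover have "pj j m \<in> cs (\<lambda>S. i \<notin> S)" using m(2) unfolding cs_def pj_def by auto
    moreover have "y = pj j (pj j m)" using m(3) pj_pj[of j m] by simp
    ultimately show "y \<in> pj j ` ?A" by blast
  qed
  moreover have "vs.fdim (pj j ` ?A)" by (rule vs.fdim_image[OF lin_pj fA])
  ultimately have "vs.dim (pj j ` ?M) \<le> vs.dim (pj j ` ?A)" by (rule vs.dim_mono_fd)
  then show ?thesis using rnA rnM e1 e2 by simp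
qed

lemma D2:
  assumes L: "vs.subspace L" "vs.fdim L" and NLf: "vs.fdim (slow_shift j i L)"
    and eq: "vs.dim (slow_shift j i L \<inter> cs (\<lambda>S. j \<notin> S)) \<le> vs.dim (L \<inter> cs (\<lambda>S. j \<notin> S))"
    and ne: "slow_shift j i L \<noteq> L"
  shows "vs.dim (L \<inter> cs (\<lambda>S. j \<in> S)) < vs.dim (slow_shift j i L \<inter> cs (\<lambda>S. j \<in> S))"
proof (rule ccontr)
  let ?NL = "slow_shift j i L"
  let ?L1 = "L \<inter> cs (\<lambda>S. j \<notin> S)"
  let ?K = "L \<inter> {x. fm j i x = 0}"
  let ?E = "L \<inter> cs (\<lambda>S. j \<in> S)"
  assume "\<not> ?thesis"
  then have le: "vs.dim (?NL \<inter> cs (\<lambda>S. j \<in> S)) \<le> vs.dim ?E" by simp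
  have fmL: "fm j i ` L \<subseteq> ?NL \<inter> cs (\<lambda>S. j \<notin> S)" using N1 fm_Uj by blast
  have L1sub: "?L1 \<subseteq> fm j i ` L"
  proof
    fix x assume x: "x \<in> ?L1"
    then have "fm j i x = x" using fm_id by blast
    then show "x \<in> fm j i ` L" using x by (metis IntD1 image_eqI)
  qed
  have sL1: "vs.subspace ?L1" using vs.subspace_inter[OF L(1) sub_cs] .
  have ffmL: "vs.fdim (fm j i ` L)" by (rule vs.fdim_image[OF lin_fm L(2)])
  have "vs.fdim (?NL \<inter> cs (\<lambda>S. j \<notin> S))" by (rule vs.fdim_subset[OF NLf]) blast
  then have "vs.dim (fm j i ` L) \<le> vs.dim (?NL \<inter> cs (\<lambda>S. j \<notin> S))"
    by (rule vs.dim_mono_fd[OF fmL])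
  then have "vs.dim (fm j i ` L) \<le> vs.dim ?L1" using eq by simp
  then have L1eq: "?L1 = fm j i ` L" by (rule vs.subspace_eq_dim[OF sL1 L1sub ffmL])
  have rn1: "vs.dim L = vs.dim (fm j i ` L) + vs.dim ?K"
    by (rule vs.rank_nullity[OF lin_fm L(1) L(2)])
  have dK: "vs.dim ?K = vs.dim (pj j ` ?K)" by (rule dimK[OF L])
  have pK: "pj j ` ?K \<subseteq> ?NL \<inter> cs (\<lambda>S. j \<in> S)" using N2 pj_E by blast
  have "vs.fdim (?NL \<inter> cs (\<lambda>S. j \<in> S))" by (rule vs.fdim_subset[OF NLf]) blast
  then have "vs.dim (pj j ` ?K) \<le> vs.dim (?NL \<inter> cs (\<lambda>S. j \<in> S))"
    by (rule vs.dim_mono_fd[OF pK])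
  have rn2: "vs.dim L = vs.dim (pj j ` L) + vs.dim (L \<inter> {x. pj j x = 0})"
    by (rule vs.rank_nullity[OF lin_pj L(1) L(2)])
  have "L \<inter> {x. pj j x = 0} = ?L1" unfolding ker_pj ..
  have dpL: "vs.dim (pj j ` L) \<le> vs.dim ?E"
    using rn1 rn2 dK le L1eq \<open>L \<inter> {x. pj j x = 0} = ?L1\<close>
      \<open>vs.dim (pj j ` ?K) \<le> vs.dim (?NL \<inter> cs (\<lambda>S. j \<in> S))\<close> by simp
  have Esub: "?E \<subseteq> pj j ` L"
  proof
    fix x assume x: "x \<in> ?E"
    then have "pj j x = x" using pj_id by blast
    then show "x \<in> pj j ` L" using x by (metis IntD1 image_eqI)
  qed
  have sE: "vs.subspace ?E" using vs.subspace_inter[OF L(1) sub_cs] .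
  have fpL: "vs.fdim (pj j ` L)" by (rule vs.fdim_image[OF lin_pj L(2)])
  have Eeq: "?E = pj j ` L" by (rule vs.subspace_eq_dim[OF sE Esub fpL dpL])
  have "gens j i L \<subseteq> L"
  proof
    fix y assume "y \<in> gens j i L"
    then obtain m where m: "m \<in> L" "y = slow_shift_elt j i m" by blast
    show "y \<in> L"
    proof (cases "fm j i m \<noteq> 0")
      case True
      then have "y = fm j i m" using m(2) sse_eq[of j i m] by simp
      then have "y \<in> ?L1" using L1eq m(1) by blast
      then show ?thesis by blast
    next
      case False
      then have "y = pj j m" using m(2) sse_eq[of j i m] by simp
      then have "y \<in> ?E" using Eeq m(1) by blast
      then show ?thesis by blast
    qed
  qed
  then have NLsub: "?NL \<subseteq> L" unfolding ss_def' by (rule vs.span_minimal[OF _ L(1)])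
  have "vs.dim (L \<inter> cs (\<lambda>S. True)) \<le> vs.dim (?NL \<inter> cs (\<lambda>S. True))"
    by (rule semi[OF L NLf]) simp
  then have "vs.dim L \<le> vs.dim ?NL" by (simp add: cs_True)
  then have "?NL = L" by (rule vs.subspace_eq_dim[OF N4 NLsub L(2)])
  then show False using ne by simp
qed


lemma ss_wedge:
  assumes L: "L \<subseteq> wedge_space n k" and ij: "i \<in> {1..n}" "j \<in> {1..n}"
  shows "slow_shift j i L \<subseteq> wedge_space n k"
proof -
  let ?Q = "\<lambda>S. S \<subseteq> {1..n} \<and> card S = k"
  have cl: "\<forall>T. i \<notin> T \<longrightarrow> j \<notin> T \<longrightarrow> ?Q (insert j T) \<longrightarrow> ?Q (insert i T)"
  proof (intro allI impI)
    fix T assume T: "i \<notin> T" "j \<notin> T" "?Q (insert j T)"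
    then have fT: "finite T" using finite_subset[of T "{1..n}"] by auto
    show "?Q (insert i T)" using T fT ij by auto
  qed
  have "gens j i L \<subseteq> wedge_space n k"
  proof
    fix y assume "y \<in> gens j i L"
    then obtain m where m: "m \<in> L" "y = slow_shift_elt j i m" by blast
    have mw: "m \<in> cs ?Q" using m(1) L wedge_cs by blast
    show "y \<in> wedge_space n k"
      using m(2) sse_eq[of j i m] fm_cs[OF cl mw] pj_cs[OF mw] wedge_cs
      by (auto split: if_splits)
  qed
  then show ?thesis unfolding ss_def' by (rule vs.span_minimal) (simp add: wedge_cs sub_cs)
qed

lemma wsum:
  fixes a b :: "nat \<Rightarrow> nat"
  assumes H: "finite H" "i \<in> H" "j \<in> H" "i < j"
    and le: "\<forall>h\<in>H. h \<noteq> i \<longrightarrow> a h \<le> b h" and le2: "a i + a j \<le> b i + b j"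
  shows "(\<Sum>h\<in>H. h * a h) + (j - i) * (b j - a j) \<le> (\<Sum>h\<in>H. h * b h)"
proof -
  have ji: "j \<in> H - {i}" using H by auto
  have fH: "finite (H - {i})" using H by auto
  have sa: "(\<Sum>h\<in>H. h * a h) = i * a i + (j * a j + (\<Sum>h\<in>H - {i} - {j}. h * a h))"
    using sum.remove[OF H(1) H(2), of "\<lambda>h. h * a h"] sum.remove[OF fH ji, of "\<lambda>h. h * a h"] by simp
  have sb: "(\<Sum>h\<in>H. h * b h) = i * b i + (j * b j + (\<Sum>h\<in>H - {i} - {j}. h * b h))"
    using sum.remove[OF H(1) H(2), of "\<lambda>h. h * b h"] sum.remove[OF fH ji, of "\<lambda>h. h * b h"] by simp
  have rest: "(\<Sum>h\<in>H - {i} - {j}. h * a h) \<le> (\<Sum>h\<in>H - {i} - {j}. h * b h)"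
    by (rule sum_mono) (use le in auto)
  have ajbj: "a j \<le> b j" using le H by auto
  have m: "i * (a i + a j) \<le> i * (b i + b j)" by (rule mult_le_mono2[OF le2])
  then have m': "i * a i + i * a j \<le> i * b i + i * b j" by (simp add: add_mult_distrib2)
  have h1: "j * x = i * x + (j - i) * x" for x
    using H(4) by (metis add_mult_distrib le_add_diff_inverse less_imp_le)
  have h2: "(j - i) * a j + (j - i) * (b j - a j) = (j - i) * b j"
    using ajbj by (metis add_mult_distrib2 le_add_diff_inverse)
  have "i * a i + j * a j + (j - i) * (b j - a j) \<le> i * b i + j * b j"
    using m' h1[of "a j"] h1[of "b j"] h2 by linarith
  then show ?thesis using sa sb rest by linarith
qed

definition Fv :: "nat \<Rightarrow> (nat set \<Rightarrow> 'a::field) set \<Rightarrow> nat" where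
  "Fv h X = vs.dim (X \<inter> cs (\<lambda>S. h \<notin> S))"

definition Dv :: "nat \<Rightarrow> (nat set \<Rightarrow> 'a::field) set \<Rightarrow> nat" where
  "Dv h X = vs.dim (X \<inter> cs (\<lambda>S. h \<in> S))"

definition Phi :: "nat \<Rightarrow> nat \<Rightarrow> (nat set \<Rightarrow> 'a::field) set \<Rightarrow> nat" where
  "Phi c n X = c * (\<Sum>h\<in>{1..n}. h * Fv h X) + (\<Sum>h\<in>{1..n}. Dv h X)"

lemma step:
  fixes L :: "(nat set \<Rightarrow> 'a::field) set"
  assumes L: "vs.subspace L" "L \<subseteq> wedge_space n k"
    and ij: "i \<in> {1..n}" "j \<in> {1..n}" "i < j"
    and ne: "slow_shift j i L \<noteq> L" and c: "vs.dim (wedge_space n k :: (nat set \<Rightarrow> 'a) set) < c"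
  shows "Phi c n L < Phi c n (slow_shift j i L)"
proof -
  let ?NL = "slow_shift j i L"
  let ?W = "wedge_space n k :: (nat set \<Rightarrow> 'a) set"
  have NLW: "?NL \<subseteq> ?W" by (rule ss_wedge[OF L(2) ij(1,2)])
  have fL: "vs.fdim L" by (rule vs.fdim_subset[OF wedge_fdim L(2)])
  have fNL: "vs.fdim ?NL" by (rule vs.fdim_subset[OF wedge_fdim NLW])
  have Fa: "\<forall>h\<in>{1..n}. h \<noteq> i \<longrightarrow> Fv h L \<le> Fv h ?NL"
    unfolding Fv_def by (auto intro!: semi[OF L(1) fL fNL])
  have Z: "vs.dim (L \<inter> cs (\<lambda>S. \<not> (i \<in> S \<and> j \<in> S))) \<le> vs.dim (?NL \<inter> cs (\<lambda>S. \<not> (i \<in> S \<and> j \<in> S)))"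
    by (rule semi[OF L(1) fL fNL]) auto
  have U: "vs.dim (L \<inter> cs (\<lambda>S. i \<notin> S \<and> j \<notin> S)) \<le> vs.dim (?NL \<inter> cs (\<lambda>S. i \<notin> S \<and> j \<notin> S))"
    by (rule semi[OF L(1) fL fNL]) auto
  have F2: "Fv i L + Fv j L \<le> Fv i ?NL + Fv j ?NL"
    using Lside[OF L(1) fL, of i j] Nside[OF N4 fNL N3, of i] Z U unfolding Fv_def by linarith
  have Da: "\<forall>h\<in>{1..n}. h \<noteq> j \<longrightarrow> Dv h L \<le> Dv h ?NL"
    unfolding Dv_def by (auto intro!: semi[OF L(1) fL fNL])
  have "L \<inter> cs (\<lambda>S. j \<in> S) \<subseteq> ?W" using L(2) by blast
  then have Dj: "Dv j L < c" unfolding Dv_def using vs.dim_mono_fd[OF _ wedge_fdim] c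
    by (meson le_less_trans)
  have ws: "(\<Sum>h\<in>{1..n}. h * Fv h L) + (j - i) * (Fv j ?NL - Fv j L) \<le> (\<Sum>h\<in>{1..n}. h * Fv h ?NL)"
    by (rule wsum[OF _ ij(1,2,3) Fa F2]) simp
  have fin: "finite {1..n}" by simp
  show ?thesis
  proof (cases "Fv j L < Fv j ?NL")
    case True
    have p1: "0 < j - i" "0 < Fv j ?NL - Fv j L" using ij(3) True by arith+
    then have "0 < (j - i) * (Fv j ?NL - Fv j L)" by simp
    then have "1 \<le> (j - i) * (Fv j ?NL - Fv j L)" by linarith
    then have SF: "(\<Sum>h\<in>{1..n}. h * Fv h L) + 1 \<le> (\<Sum>h\<in>{1..n}. h * Fv h ?NL)" using ws by linarith
    have d1: "(\<Sum>h\<in>{1..n}. Dv h L) = Dv j L + (\<Sum>h\<in>{1..n} - {j}. Dv h L)"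
      by (rule sum.remove[OF fin ij(2)])
    have d2: "(\<Sum>h\<in>{1..n} - {j}. Dv h L) \<le> (\<Sum>h\<in>{1..n} - {j}. Dv h ?NL)"
      by (rule sum_mono) (use Da in auto)
    have d3: "(\<Sum>h\<in>{1..n} - {j}. Dv h ?NL) \<le> (\<Sum>h\<in>{1..n}. Dv h ?NL)"
      by (rule sum_mono2) auto
    have "c * ((\<Sum>h\<in>{1..n}. h * Fv h L) + 1) \<le> c * (\<Sum>h\<in>{1..n}. h * Fv h ?NL)"
      by (rule mult_le_mono2[OF SF])
    then show ?thesis unfolding Phi_def using d1 d2 d3 Dj by (simp add: algebra_simps)
  next
    case False
    then have "vs.dim (?NL \<inter> cs (\<lambda>S. j \<notin> S)) \<le> vs.dim (L \<inter> cs (\<lambda>S. j \<notin> S))"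
      unfolding Fv_def by simp
    then have Dlt: "Dv j L < Dv j ?NL" unfolding Dv_def by (rule D2[OF L(1) fL fNL _ ne])
    have "(\<Sum>h\<in>{1..n}. Dv h L) < (\<Sum>h\<in>{1..n}. Dv h ?NL)"
      by (rule sum_strict_mono_ex1[OF fin]) (use Da Dlt ij(2) in auto)
    moreover have "(\<Sum>h\<in>{1..n}. h * Fv h L) \<le> (\<Sum>h\<in>{1..n}. h * Fv h ?NL)" using ws by linarith
    then have "c * (\<Sum>h\<in>{1..n}. h * Fv h L) \<le> c * (\<Sum>h\<in>{1..n}. h * Fv h ?NL)"
      by (rule mult_le_mono2)
    ultimately show ?thesis unfolding Phi_def by linarith
  qed
qed

lemma Phi_bound:
  fixes X :: "(nat set \<Rightarrow> 'a::field) set"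
  assumes "X \<subseteq> wedge_space n k"
  shows "Phi c n X \<le> c * (\<Sum>h\<in>{1..n}. h * vs.dim (wedge_space n k :: (nat set \<Rightarrow> 'a) set))
     + (\<Sum>h\<in>{1..n}. vs.dim (wedge_space n k :: (nat set \<Rightarrow> 'a) set))"
proof -
  let ?d = "vs.dim (wedge_space n k :: (nat set \<Rightarrow> 'a) set)"
  have F: "Fv h X \<le> ?d" for h unfolding Fv_def
    by (rule vs.dim_mono_fd[OF _ wedge_fdim]) (use assms in blast)
  have D: "Dv h X \<le> ?d" for h unfolding Dv_def
    by (rule vs.dim_mono_fd[OF _ wedge_fdim]) (use assms in blast)
  have "(\<Sum>h\<in>{1..n}. h * Fv h X) \<le> (\<Sum>h\<in>{1..n}. h * ?d)"
    by (rule sum_mono) (simp add: F)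
  then have "c * (\<Sum>h\<in>{1..n}. h * Fv h X) \<le> c * (\<Sum>h\<in>{1..n}. h * ?d)" by (rule mult_le_mono2)
  moreover have "(\<Sum>h\<in>{1..n}. Dv h X) \<le> (\<Sum>h\<in>{1..n}. ?d)" by (rule sum_mono) (simp add: D)
  ultimately show ?thesis unfolding Phi_def by linarith
qed

theorem theorem3p9:
  fixes n k :: nat and L :: "(nat set \<Rightarrow> 'a::field) set" and I :: "nat set"
  assumes char: "(2::'a) \<noteq> 0"
    and subsp: "module.subspace wscale L"
    and amb: "L \<subseteq> wedge_space n k"
    and I: "I \<subseteq> {1..n}"
  shows "\<not> (\<exists>Ls :: nat \<Rightarrow> (nat set \<Rightarrow> 'a) set.
            Ls 0 = L \<and>
            (\<forall>s. \<exists>i\<in>I. \<exists>j\<in>I. i < j \<and> Ls (Suc s) = slow_shift j i (Ls s) \<and> Ls (Suc s) \<noteq> Ls s))"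
proof
  assume "\<exists>Ls :: nat \<Rightarrow> (nat set \<Rightarrow> 'a) set.
            Ls 0 = L \<and>
            (\<forall>s. \<exists>i\<in>I. \<exists>j\<in>I. i < j \<and> Ls (Suc s) = slow_shift j i (Ls s) \<and> Ls (Suc s) \<noteq> Ls s)"
  then obtain Ls :: "nat \<Rightarrow> (nat set \<Rightarrow> 'a) set" where L0: "Ls 0 = L"
    and mv: "\<And>s. \<exists>i\<in>I. \<exists>j\<in>I. i < j \<and> Ls (Suc s) = slow_shift j i (Ls s) \<and> Ls (Suc s) \<noteq> Ls s"
    by blast
  let ?W = "wedge_space n k :: (nat set \<Rightarrow> 'a) set"
  define c where "c = vs.dim ?W + 1"
  have inv: "vs.subspace (Ls s) \<and> Ls s \<subseteq> ?W" for s
  proof (induction s)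
    case 0 then show ?case using L0 subsp amb by simp
  next
    case (Suc s)
    obtain i j where ij: "i \<in> I" "j \<in> I" "Ls (Suc s) = slow_shift j i (Ls s)" using mv[of s] by blast
    have ij': "i \<in> {1..n}" "j \<in> {1..n}" using ij I by auto
    have "slow_shift j i (Ls s) \<subseteq> ?W" using ss_wedge[OF _ ij'] Suc by blast
    then show ?case using ij(3) N4 by simp
  qed
  have inc: "Phi c n (Ls s) < Phi c n (Ls (Suc s))" for s
  proof -
    obtain i j where ij: "i \<in> I" "j \<in> I" "i < j" "Ls (Suc s) = slow_shift j i (Ls s)"
      "Ls (Suc s) \<noteq> Ls s" using mv[of s] by blast
    show ?thesis unfolding ij(4)
      by (rule step) (use inv[of s] ij I c_def in auto)
  qed
  have grow: "s \<le> Phi c n (Ls s)" for s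
  proof (induction s)
    case 0 then show ?case by simp
  next
    case (Suc s) then show ?case using inc[of s] by simp
  qed
  define B where "B = c * (\<Sum>h\<in>{1..n}. h * vs.dim ?W) + (\<Sum>h\<in>{1..n}. vs.dim ?W)"
  have "Phi c n (Ls (Suc B)) \<le> B" unfolding B_def by (rule Phi_bound) (use inv in blast)
  then show False using grow[of "Suc B"] by simp
qed

end
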